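(* Let $L\ge2$ and $q\in[1,2]$. Under balance $\lambda=0$, the weight decay $\frac12\sum_{i=1}^L\|w_i\|_{L_2}^2$ expressed in $x=\prod_iw_i$ equals $\frac L2\sum_{j\in[n]}|x_j|^{2/L}$. This function coincides with the on-manifold regularizer $M_{\mathrm{reg}}(x)=\frac{L}{L(2-q)+q}\sum_{j\in[n]}|x_j|^{2-q\frac{L-1}{L}}$ (for all $x\in\mathbb{R}^n$) if and only if $q=2$.
   Context: Setting: $w_1,\dots,w_L\in\mathbb{R}^n$, $x=\prod_iw_i$ entrywise; balance $\lambda=0$ means $|w_i|^q=|w_j|^q$ entrywise for all $i,j$, so $|w_i|=|x|^{1/L}$. $M_{\mathrm{reg}}$ is the regularizer induced on $x$ by decoupled weight decay under $L_p$ steepest descent ($1/p+1/q=1$) with mirror map $\nabla^2R(x)=\operatorname{diag}(1/(L|x_j|^{q(L-1)/L}))$, defined as $\sum_j\int^{x_j}\partial_j^2R(s)\,Ls\,ds$. *)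

theory Defs
  imports "HOL-Analysis.Analysis"
begin

definition prod_weights :: "nat \<Rightarrow> (nat \<Rightarrow> real^'n) \<Rightarrow> real^'n" where
  "prod_weights L w = (\<chi> j. \<Prod>i\<in>{1..L}. w i $ j)"

definition balanced :: "real \<Rightarrow> nat \<Rightarrow> (nat \<Rightarrow> real^'n) \<Rightarrow> bool" where
  "balanced q L w \<longleftrightarrow> (\<forall>i\<in>{1..L}. \<forall>k\<in>{1..L}. \<forall>j. \<bar>w i $ j\<bar> powr q = \<bar>w k $ j\<bar> powr q)"

definition wd_reg :: "nat \<Rightarrow> real^'n \<Rightarrow> real" where
  "wd_reg L x = real L / 2 * (\<Sum>j\<in>UNIV. \<bar>x $ j\<bar> powr (2 / real L))"

definition M_reg :: "real \<Rightarrow> nat \<Rightarrow> real^'n \<Rightarrow> real" where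
  "M_reg q L x = real L / (real L * (2 - q) + q) *
     (\<Sum>j\<in>UNIV. \<bar>x $ j\<bar> powr (2 - q * (real L - 1) / real L))"

end

theory Submission
  imports Defs
begin

lemma norm_sq_vec: "(norm (v :: real^'n))\<^sup>2 = (\<Sum>j\<in>UNIV. (v $ j)\<^sup>2)"
  unfolding norm_vec_def L2_set_def
  by (simp add: sum_nonneg)

lemma powr_inj_abs:
  assumes "(q::real) > 0" "\<bar>a::real\<bar> powr q = \<bar>b\<bar> powr q"
  shows "\<bar>a\<bar> = \<bar>b\<bar>"
proof -
  have "(\<bar>a\<bar> powr q) powr (1/q) = (\<bar>b\<bar> powr q) powr (1/q)" using assms by simp
  thus ?thesis using assms(1) by (simp add: powr_powr)
qed

lemma part1:
  fixes L :: nat and q :: real and w :: "nat \<Rightarrow> real^'n"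
  assumes "L \<ge> 2" "q \<ge> 1" "balanced q L w"
  shows "(1/2) * (\<Sum>i\<in>{1..L}. (norm (w i))\<^sup>2) = wd_reg L (prod_weights L w)"
proof -
  define a where "a j = \<bar>w 1 $ j\<bar>" for j
  have 1: "1 \<in> {1..L}" using assms by auto
  have eq: "\<bar>w i $ j\<bar> = a j" if "i \<in> {1..L}" for i j
  proof -
    have "\<bar>w i $ j\<bar> powr q = \<bar>w 1 $ j\<bar> powr q"
      using assms(3) that 1 unfolding balanced_def by blast
    moreover have "q > 0" using assms(2) by simp
    ultimately show ?thesis unfolding a_def by (rule powr_inj_abs[rotated])
  qed
  have "(\<Sum>i\<in>{1..L}. (norm (w i))\<^sup>2) = (\<Sum>i\<in>{1..L}. \<Sum>j\<in>UNIV. (a j)\<^sup>2)"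
  proof (rule sum.cong[OF refl])
    fix i assume i: "i \<in> {1..L}"
    have "(norm (w i))\<^sup>2 = (\<Sum>j\<in>UNIV. (w i $ j)\<^sup>2)" by (rule norm_sq_vec)
    also have "\<dots> = (\<Sum>j\<in>UNIV. (a j)\<^sup>2)"
      by (rule sum.cong[OF refl]) (metis eq[OF i] power2_abs)
    finally show "(norm (w i))\<^sup>2 = (\<Sum>j\<in>UNIV. (a j)\<^sup>2)" .
  qed
  also have "\<dots> = real L * (\<Sum>j\<in>UNIV. (a j)\<^sup>2)" by simp
  finally have lhs: "(\<Sum>i\<in>{1..L}. (norm (w i))\<^sup>2) = real L * (\<Sum>j\<in>UNIV. (a j)\<^sup>2)" .
  have px: "\<bar>prod_weights L w $ j\<bar> = a j ^ L" for j
  proof -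
    have "\<bar>prod_weights L w $ j\<bar> = (\<Prod>i\<in>{1..L}. \<bar>w i $ j\<bar>)"
      unfolding prod_weights_def by (simp add: abs_prod)
    also have "\<dots> = (\<Prod>i\<in>{1..L}. a j)" by (rule prod.cong[OF refl]) (rule eq)
    finally show ?thesis by simp
  qed
  have an: "a j \<ge> 0" for j unfolding a_def by simp
  have Lp: "real L > 0" using assms by simp
  have pw: "(a j ^ L) powr (2 / real L) = (a j)\<^sup>2" for j
  proof (cases "a j = 0")
    case True thus ?thesis using assms by simp
  next
    case False
    hence pos: "a j > 0" using an[of j] by simp
    have "(a j ^ L) powr (2 / real L) = (a j powr real L) powr (2 / real L)"
      using pos by (simp add: powr_realpow)
    also have "\<dots> = a j powr 2" using Lp by (simp add: powr_powr)
    also have "\<dots> = (a j)\<^sup>2" using pos by (simp add: powr_realpow)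
    finally show ?thesis .
  qed
  have "wd_reg L (prod_weights L w) = real L / 2 * (\<Sum>j\<in>UNIV. (a j)\<^sup>2)"
    unfolding wd_reg_def px pw by simp
  then show ?thesis using lhs by simp
qed

theorem corollary4:
  fixes L :: nat and q :: real
  assumes "L \<ge> 2" and "1 \<le> q" and "q \<le> 2"
  shows "(\<forall>w :: nat \<Rightarrow> real^'n. balanced q L w \<longrightarrow>
            (1/2) * (\<Sum>i\<in>{1..L}. (norm (w i))\<^sup>2) = wd_reg L (prod_weights L w))
         \<and> ((\<forall>x :: real^'n. wd_reg L x = M_reg q L x) \<longleftrightarrow> q = 2)"
proof (intro conjI allI impI iffI)
  fix w :: "nat \<Rightarrow> real^'n" assume "balanced q L w"
  thus "(1/2) * (\<Sum>i\<in>{1..L}. (norm (w i))\<^sup>2) = wd_reg L (prod_weights L w)"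
    using part1 assms by blast
next
  assume q2: "q = 2"
  fix x :: "real^'n"
  {
    have Lp: "real L > 0" using assms by simp
    have e: "2 - 2 * (real L - 1) / real L = 2 / real L" using Lp by (simp add: field_simps)
    show "wd_reg L x = M_reg q L x" unfolding wd_reg_def M_reg_def q2 e by simp
  }
next
  assume h: "\<forall>x :: real^'n. wd_reg L x = M_reg q L x"
  define one :: "real^'n" where "one = (\<chi> j. 1)"
  have "wd_reg L one = M_reg q L one" using h by simp
  hence "real L / 2 * real CARD('n) = real L / (real L * (2 - q) + q) * real CARD('n)"
    unfolding wd_reg_def M_reg_def one_def by simp
  moreover have "real CARD('n) > 0" by simp
  moreover have "real L > 0" using assms by simp
  ultimately have "1 / 2 = 1 / (real L * (2 - q) + q)" by simp
  moreover have "real L * (2 - q) + q > 0" using assms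
    by (smt (verit) mult_nonneg_nonneg of_nat_0_le_iff)
  ultimately have "real L * (2 - q) + q = 2" by (simp add: field_simps)
  hence "(real L - 1) * (2 - q) = 0" by (simp add: algebra_simps)
  moreover have "real L - 1 \<noteq> 0" using assms by simp
  ultimately show "q = 2" by simp
qed

end
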